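(* In the two-door cascading memoryless semi-fractional setting, let $\pi^\star$ be an optimal semi-fractional sequence, and let $\theta=-c\log(q_1)/p_2$ and $\psi=\frac12\big(\sqrt{\theta^2+4\theta}-\theta\big)$ (natural logarithms). Then $$\mathbb{E}[\pi^\star]\in\frac{1}{\log(1/q_1)}\left(\log\frac{1}{1-\psi}+\frac{\theta}{\psi}+1\right)-\left[0,\frac{p_2}{\log(1/q_1)}\right],$$ where $a-[0,b]$ denotes the interval $[a-b,a]$.
   Context: Two cascading memoryless doors with durations: parameters $p_1,p_2\in(0,1)$, $q_1=1-p_1$, $q_2=1-p_2$, and $c>0$. Both doors start closed. A semi-fractional sequence is an infinite alternating sequence of knocks $1^{t_1}\,2\,1^{t_2}\,2\cdots$ with real $t_j\ge0$. A 1-knock $1^t$ takes $t$ time units and, if door 1 is closed, opens it with probability $1-q_1^t$, independently of everything else. A 2-knock takes $c$ time units and opens door 2 with probability $p_2$ (independently) if door 1 is open at that time, and with probability $0$ otherwise. There is no feedback. The running time is the time at which both doors are open, and $\mathbb{E}[\pi]$ is its expectation for sequence $\pi$; $\pi^\star$ is optimal if $\mathbb{E}[\pi^\star]\le\mathbb{E}[\pi]$ for all semi-fractional $\pi$. *)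

theory Defs
  imports "HOL-Analysis.Analysis"
begin

text \<open>
Two cascading memoryless doors with durations.  A semi-fractional sequence
1^{t_1} 2 1^{t_2} 2 ... is represented by t :: nat => real, where t j is the
exponent t_{j+1} (0-indexed), with t j >= 0.

One_time t k = t_1 + ... + t_k is the total 1-knock time spent before the k-th
2-knock.  Door 1 is closed at the k-th 2-knock with probability q1 powr (One_time t k),
so door 1 is first found open at 2-knock m with probability
q1 powr (One_time t (m-1)) - q1 powr (One_time t m); afterwards every 2-knock
independently opens door 2 with probability p2.
\<close>

definition One_time :: "(nat \<Rightarrow> real) \<Rightarrow> nat \<Rightarrow> real" where
  "One_time t k = (\<Sum>i<k. t i)"

text \<open>Probability that door 2 (hence not both doors) is still closed after the
first k 2-knocks have been performed.\<close>
definition still_closed :: "real \<Rightarrow> real \<Rightarrow> (nat \<Rightarrow> real) \<Rightarrow> nat \<Rightarrow> real" where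
  "still_closed q1 q2 t k =
     q1 powr One_time t k
     + (\<Sum>m\<in>{1..k}. (q1 powr One_time t (m - 1) - q1 powr One_time t m) * q2 ^ (k - m + 1))"

text \<open>Expected running time: the running time is the end of the first successful
2-knock.  The (k+1)-st block 1^{t_{k+1}} 2 (duration t_{k+1} + c) is executed
exactly when the doors are not both open after k 2-knocks, so by the tail-sum
formula the expectation is the following sum (in ennreal, possibly infinite).\<close>
definition exp_time :: "real \<Rightarrow> real \<Rightarrow> real \<Rightarrow> (nat \<Rightarrow> real) \<Rightarrow> ennreal" where
  "exp_time p1 p2 c t =
     (\<Sum>k. ennreal ((t k + c) * still_closed (1 - p1) (1 - p2) t k))"

definition semi_fractional :: "(nat \<Rightarrow> real) \<Rightarrow> bool" where
  "semi_fractional t \<longleftrightarrow> (\<forall>j. 0 \<le> t j)"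

definition optimal_seq :: "real \<Rightarrow> real \<Rightarrow> real \<Rightarrow> (nat \<Rightarrow> real) \<Rightarrow> bool" where
  "optimal_seq p1 p2 c t \<longleftrightarrow> semi_fractional t \<and>
     (\<forall>t'. semi_fractional t' \<longrightarrow> exp_time p1 p2 c t \<le> exp_time p1 p2 c t')"

end

theory Submission
  imports Defs
begin

lemma cont_ineq:
  fixes psi u :: real
  assumes "0 < psi" "psi < 1" "1 \<le> u"
  shows "(u - 1) * (psi - ln (u * (1 - psi))) \<le> psi^2 / (1 - psi)"
proof -
  define y where "y = u * (1 - psi)"
  have y: "0 < y" using assms by (simp add: y_def)
  have "ln (1 / y) \<le> 1 / y - 1" using y by (intro ln_le_minus_one) simp
  hence ly: "1 - 1 / y \<le> ln y" using y by (simp add: ln_div)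
  have "(u - 1) * (psi - ln y) \<le> (u - 1) * (psi - 1 + 1 / y)"
    using ly assms by (intro mult_left_mono) auto
  also have "\<dots> \<le> psi^2 / (1 - psi)"
  proof -
    have yn: "y \<noteq> 0" using y by simp
    have e: "(psi - 1 + 1 / y) * y = (psi - 1) * y + 1"
    proof -
      have "1 / y * y = 1" using yn by simp
      thus ?thesis by (simp only: distrib_right)
    qed
    have "(u - 1) * (psi - 1 + 1 / y) * y = (u - 1) * ((psi - 1 + 1 / y) * y)"
      by (simp only: mult.assoc)
    also have "\<dots> = (u - 1) * (1 - u * (1-psi)^2)" unfolding e unfolding y_def by (simp add: power2_eq_square algebra_simps)
    also have "\<dots> \<le> u * psi^2" 
    proof -
      have "0 \<le> (u * (1 - psi) - 1)^2" by simp
      thus ?thesis by (simp add: power2_eq_square algebra_simps)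
    qed
    also have "\<dots> = psi^2 / (1 - psi) * y" using assms by (simp add: field_simps y_def)
    finally have H: "(u - 1) * (psi - 1 + 1 / y) * y \<le> psi^2 / (1 - psi) * y" .
    show ?thesis using mult_right_le_imp_le[OF H y] .
  qed
  finally show ?thesis by (simp add: y_def)
qed

lemma core_ineq:
  fixes p2 psi u :: real
  assumes "0 < p2" "p2 < 1" "0 < psi" "psi < 1" "1 \<le> u"
  defines "v \<equiv> p2 + (1 - p2) * u"
  shows "p2 * (u - 1) * (1 + psi / (1 - psi) - ln (1 - psi) - p2)
         \<le> p2 * (psi^2 / (1 - psi)) * u + u * ln u - v * ln v"
proof -
  have u0: "0 < u" using assms by simp
  have v1: "1 \<le> v"
  proof -
    have "(1-p2)*1 \<le> (1-p2)*u" using assms by (intro mult_left_mono) auto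
    thus ?thesis by (simp add: v_def)
  qed
  have v0: "0 < v" using v1 by simp
  have "ln (v / u) \<le> v / u - 1" using u0 v0 by (intro ln_le_minus_one) simp
  hence lv: "ln v \<le> ln u + (v - u) / u" using u0 v0 by (simp add: ln_div diff_divide_distrib)
  have vu: "v - u = - p2 * (u - 1)" by (simp add: v_def algebra_simps)
  have "v * ln v \<le> v * (ln u + (v - u) / u)" using lv v0 by (simp add: mult_left_mono)
  also have "\<dots> = v * ln u + (v - u) * v / u" by (simp add: algebra_simps)
  also have "\<dots> = v * ln u + (- p2 * (u - 1)) * v / u" by (simp only: vu)
  also have "\<dots> = v * ln u - p2 * (u - 1) * v / u" by simp
  finally have A: "v * ln v \<le> v * ln u - p2 * (u - 1) * v / u" .
  have C: "(u - 1) * (psi - ln (u * (1 - psi))) \<le> psi^2 / (1 - psi)"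
    using cont_ineq assms by simp
  have lnu: "ln (u * (1 - psi)) = ln u + ln (1 - psi)" using u0 assms by (simp add: ln_mult)
  have th: "psi / (1 - psi) = psi + psi^2/(1-psi)" using assms by (simp add: field_simps power2_eq_square)
  have vdu: "v / u = (1 - p2) + p2 / u" using u0 by (simp add: v_def field_simps)
  have D: "(u - 1) * (1 + psi / (1 - psi) - ln (1 - psi) - p2)
         \<le> (psi^2 / (1 - psi)) * u + (u - 1) * ln u + (u - 1) * v / u"
  proof -
    have e1: "(u - 1) * v / u = (u - 1) * (1 - p2) + (u - 1) * p2 / u"
    proof -
      have "(u - 1) * v / u = (u - 1) * (v / u)" by simp
      also have "\<dots> = (u - 1) * (1 - p2) + (u - 1) * p2 / u" unfolding vdu by (simp add: distrib_left)
      finally show ?thesis .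
    qed
    have p: "0 \<le> (u - 1) * p2 / u" using assms u0 by simp
    define Th where "Th = psi^2 / (1 - psi)"
    define Lq where "Lq = ln (1 - psi)"
    have C': "(u-1)*psi - (u-1)*ln u - (u-1)*Lq \<le> Th" using C lnu unfolding Th_def Lq_def
      by (simp add: algebra_simps)
    have l: "(u - 1) * (1 + psi / (1 - psi) - ln (1 - psi) - p2)
       = (u - 1) + (u-1)*psi + (u-1)*Th - (u-1)*Lq - (u-1)*p2"
      unfolding th Th_def Lq_def by (simp add: algebra_simps)
    have r: "(psi^2 / (1 - psi)) * u + (u - 1) * ln u + (u - 1) * v / u
       = (u-1)*Th + Th + (u - 1) * ln u + (u - 1) - (u-1)*p2 + (u - 1) * p2 / u"
      unfolding e1 Th_def[symmetric] by (simp add: algebra_simps)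
    show ?thesis unfolding l r using C' p by linarith
  qed
  have "p2 * (u - 1) * (1 + psi / (1 - psi) - ln (1 - psi) - p2)
       \<le> p2 * ((psi^2 / (1 - psi)) * u + (u - 1) * ln u + (u - 1) * v / u)"
    using D assms by (simp add: mult.assoc mult_left_mono)
  also have "\<dots> \<le> p2 * (psi^2 / (1 - psi)) * u + u * ln u - v * ln v"
  proof -
    have f1: "p2 * ((psi^2 / (1 - psi)) * u + (u - 1) * ln u + (u - 1) * v / u)
      = p2 * (psi^2 / (1 - psi)) * u + p2 * (u - 1) * ln u + p2 * (u - 1) * v / u"
      by (simp add: algebra_simps)
    have vv: "v = u - p2 * (u - 1)" using vu by simp
    have f3: "p2 * (u - 1) * ln u = u * ln u - v * ln u" unfolding vv by (simp add: algebra_simps)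
    show ?thesis unfolding f1 f3 using A by linarith
  qed
  finally show ?thesis .
qed

lemma step_ineq:
  fixes lam p2 psi c A S t K :: real
  assumes lam: "0 < lam" and p2: "0 < p2" "p2 < 1" and psi: "0 < psi" "psi < 1"
    and lc: "lam * c = p2 * (psi^2 / (1 - psi))"
    and A: "0 < A" "A \<le> S" and t: "0 \<le> t"
    and K: "K = 1 + psi / (1 - psi) - ln (1 - psi) - p2"
  shows "S * (K - ln (S / A)) \<le> lam * (t + c) * S
     + (p2 * (A * exp (- lam * t)) + (1 - p2) * S) * (K - ln ((p2 * (A * exp (- lam * t)) + (1 - p2) * S) / (A * exp (- lam * t))))"
proof -
  define A' where "A' = A * exp (- lam * t)"
  define u where "u = S / A'"
  define v where "v = p2 + (1 - p2) * u"
  have A'0: "0 < A'" using A by (simp add: A'_def)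
  have ee: "exp (- lam * t) * exp (lam * t) = 1" by (simp add: exp_minus[symmetric] exp_add[symmetric])
  have u_eq: "u = (S / A) * exp (lam * t)" unfolding u_def A'_def using A
    by (simp add: field_simps exp_minus)
  have w1: "1 \<le> S / A" using A by simp
  have e1: "1 \<le> exp (lam * t)" using lam t by simp
  have u1: "1 \<le> u" unfolding u_eq using w1 e1
    by (metis mult_mono' mult_1_left zero_le_one order_trans)
  have S_eq: "S = A' * u" unfolding u_def using A'0 by simp
  have S'_eq: "p2 * A' + (1 - p2) * S = A' * v" unfolding v_def S_eq by (simp add: algebra_simps)
  have lnw: "ln (S / A) = ln u - lam * t"
  proof -
    have pS: "0 < S / A" using A by simp
    have "ln u = ln (S / A) + ln (exp (lam * t))" unfolding u_eq using pS by (simp only: ln_mult) auto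
    hence "ln u = ln (S / A) + lam * t" by simp
    thus ?thesis by simp
  qed
  have core: "p2 * (u - 1) * K \<le> p2 * (psi^2 / (1 - psi)) * u + u * ln u - v * ln v"
    using core_ineq[OF p2 psi u1] unfolding K v_def by simp
  have lv: "ln ((A' * v) / A') = ln v" using A'0 by simp
  have "lam * (t + c) * S + (A' * v) * (K - ln v) - S * (K - ln (S / A))
     = A' * (lam * c * u + u * ln u - v * ln v - (u - v) * K)"
    unfolding lnw unfolding S_eq by (simp add: algebra_simps)
  also have "\<dots> = A' * (p2 * (psi^2 / (1 - psi)) * u + u * ln u - v * ln v - p2 * (u - 1) * K)"
    unfolding lc v_def by (simp add: algebra_simps)
  also have "\<dots> \<ge> 0" using core A'0 by simp
  finally have "0 \<le> lam * (t + c) * S + (A' * v) * (K - ln v) - S * (K - ln (S / A))" .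
  thus ?thesis using S'_eq lv unfolding A'_def[symmetric] by simp
qed

lemma OT_0[simp]: "One_time t 0 = 0" by (simp add: One_time_def)
lemma OT_Suc: "One_time t (Suc k) = One_time t k + t k" by (simp add: One_time_def)

lemma sc_0: "0 < q1 \<Longrightarrow> still_closed q1 q2 t 0 = 1"
  by (simp add: still_closed_def)

lemma sc_Suc: "still_closed q1 q2 t (Suc k) =
   (1 - q2) * q1 powr One_time t (Suc k) + q2 * still_closed q1 q2 t k"
proof -
  define a where "a m = q1 powr One_time t m" for m
  define d where "d m = (a (m - 1) - a m)" for m
  have "(\<Sum>m\<in>{1..Suc k}. d m * q2 ^ (Suc k - m + 1))
      = (\<Sum>m\<in>{1..k}. d m * q2 ^ (Suc k - m + 1)) + d (Suc k) * q2"
    by (simp add: sum.cl_ivl_Suc)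
  also have "(\<Sum>m\<in>{1..k}. d m * q2 ^ (Suc k - m + 1)) = q2 * (\<Sum>m\<in>{1..k}. d m * q2 ^ (k - m + 1))"
    unfolding sum_distrib_left
  proof (rule sum.cong)
    fix m assume "m \<in> {1..k}"
    hence "Suc k - m + 1 = Suc (k - m + 1)" by auto
    thus "d m * q2 ^ (Suc k - m + 1) = q2 * (d m * q2 ^ (k - m + 1))" by simp
  qed simp
  finally have E: "(\<Sum>m\<in>{1..Suc k}. d m * q2 ^ (Suc k - m + 1))
      = q2 * (\<Sum>m\<in>{1..k}. d m * q2 ^ (k - m + 1)) + d (Suc k) * q2" .
  have "still_closed q1 q2 t (Suc k) = a (Suc k) + (\<Sum>m\<in>{1..Suc k}. d m * q2 ^ (Suc k - m + 1))"
    by (simp add: still_closed_def a_def d_def)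
  also have "\<dots> = a (Suc k) + q2 * (\<Sum>m\<in>{1..k}. d m * q2 ^ (k - m + 1)) + (a k - a (Suc k)) * q2"
    unfolding E by (simp add: d_def)
  also have "still_closed q1 q2 t k = a k + (\<Sum>m\<in>{1..k}. d m * q2 ^ (k - m + 1))"
    by (simp add: still_closed_def a_def d_def)
  ultimately show ?thesis by (simp add: a_def algebra_simps)
qed

lemma powr_exp: "0 < (q::real) \<Longrightarrow> q powr x = exp (- (- ln q) * x)"
  unfolding powr_def by (auto simp: mult.commute)

lemma phi_bound:
  fixes A S K :: real
  assumes "0 < A" "0 < S"
  shows "S * (K - ln (S / A)) \<le> A * exp (K - 1)"
proof -
  define w where "w = S / A"
  have w: "0 < w" using assms by (simp add: w_def)
  have "ln (exp (K - 1) / w) \<le> exp (K - 1) / w - 1" using w by (intro ln_le_minus_one) simp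
  hence "K - 1 - ln w \<le> exp (K - 1) / w - 1" using w by (simp add: ln_div)
  hence "w * (K - ln w) \<le> w * (exp (K - 1) / w)" using w by (intro mult_left_mono) auto
  hence "w * (K - ln w) \<le> exp (K - 1)" using w by simp
  hence "A * (w * (K - ln w)) \<le> A * exp (K - 1)" using assms by (intro mult_left_mono) auto
  thus ?thesis using assms by (simp add: w_def)
qed

lemma seq_facts:
  fixes p1 p2 lam :: real and t :: "nat \<Rightarrow> real"
  assumes p1: "0 < p1" "p1 < 1" and p2: "0 < p2" "p2 < 1" and lam: "lam = - ln (1 - p1)"
    and t: "\<And>j. 0 \<le> t j"
  defines "A \<equiv> \<lambda>k. exp (- lam * One_time t k)"
  defines "S \<equiv> \<lambda>k. still_closed (1 - p1) (1 - p2) t k"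
  shows "A 0 = 1" "S 0 = 1" "\<And>k. 0 < A k" "\<And>k. A (Suc k) = A k * exp (- lam * t k)"
    "\<And>k. S (Suc k) = p2 * A (Suc k) + (1 - p2) * S k" "\<And>k. A k \<le> S k" "0 < lam"
proof -
  have q: "0 < 1 - p1" using p1 by simp
  show "A 0 = 1" by (simp add: A_def)
  show "S 0 = 1" using sc_0[OF q] by (simp add: S_def)
  show "\<And>k. 0 < A k" by (simp add: A_def)
  show As: "\<And>k. A (Suc k) = A k * exp (- lam * t k)"
    by (simp add: A_def OT_Suc algebra_simps exp_add[symmetric])
  have pw: "\<And>x. (1 - p1) powr x = exp (- lam * x)" using powr_exp[OF q] lam by simp
  show Ss: "\<And>k. S (Suc k) = p2 * A (Suc k) + (1 - p2) * S k"
    by (simp add: S_def A_def sc_Suc pw)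
  show l0: "0 < lam" using p1 lam by simp
  show "\<And>k. A k \<le> S k"
  proof -
    fix k show "A k \<le> S k"
    proof (induction k)
      case 0 thus ?case by (simp add: A_def S_def sc_0[OF q])
    next
      case (Suc k)
      have "exp (- lam * t k) \<le> 1" using l0 t[of k] by simp
      hence "A (Suc k) \<le> A k" unfolding As using \<open>\<And>k. 0 < A k\<close>[of k]
        by (simp add: mult_le_cancel_left1)
      hence "A (Suc k) \<le> S k" using Suc by simp
      hence "(1 - p2) * A (Suc k) \<le> (1 - p2) * S k" using p2 by (intro mult_left_mono) auto
      thus ?case unfolding Ss by (simp add: algebra_simps)
    qed
  qed
qed

lemma lower_partial:
  fixes p1 p2 c psi lam K :: real and t :: "nat \<Rightarrow> real"
  assumes p1: "0 < p1" "p1 < 1" and p2: "0 < p2" "p2 < 1" and psi: "0 < psi" "psi < 1"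
    and lam: "lam = - ln (1 - p1)" and lc: "lam * c = p2 * (psi^2 / (1 - psi))"
    and t: "\<And>j. 0 \<le> t j"
    and K: "K = 1 + psi / (1 - psi) - ln (1 - psi) - p2"
  shows "K - exp (- lam * One_time t n) * exp (K - 1)
     \<le> lam * (\<Sum>k<n. (t k + c) * still_closed (1 - p1) (1 - p2) t k)"
proof -
  define A where "A = (\<lambda>k. exp (- lam * One_time t k))"
  define S where "S = (\<lambda>k. still_closed (1 - p1) (1 - p2) t k)"
  note F = seq_facts[of p1 p2 lam t, OF p1 p2 lam t, folded A_def S_def]
  have inv: "K \<le> lam * (\<Sum>k<n. (t k + c) * S k) + S n * (K - ln (S n / A n))" for n
  proof (induction n)
    case 0 thus ?case by (simp add: F(2) A_def)
  next
    case (Suc n)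
    have "S n * (K - ln (S n / A n)) \<le> lam * (t n + c) * S n + S (Suc n) * (K - ln (S (Suc n) / A (Suc n)))"
      using step_ineq[OF F(7) p2 psi lc F(3)[of n] F(6)[of n] t[of n] K] F(4)[of n] F(5)[of n] by (simp add: A_def)
    thus ?case using Suc by (simp add: algebra_simps)
  qed
  have "S n * (K - ln (S n / A n)) \<le> A n * exp (K - 1)"
  proof -
    have a: "0 < A n" by (simp add: A_def)
    have "A n \<le> S n" using F(6)[of n] by (simp add: A_def)
    hence "0 < S n" using a by simp
    thus ?thesis using phi_bound[OF a] by blast
  qed
  thus ?thesis using inv[of n] by (simp add: A_def S_def)
qed

lemma upper_real:
  fixes p2 psi L :: real
  assumes p2: "0 < p2" "p2 < 1" and psi: "0 < psi" "psi < 1"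
  defines "x \<equiv> exp (- (p2 * psi))"
  shows "L + p2 * (psi^2 / (1 - psi)) + (p2 * psi + p2 * (psi^2 / (1 - psi))) *
           ((1 - psi) * x / (1 - x) + (p2 * (1 - psi) + (1 - p2)) / p2)
         \<le> 1 + psi / (1 - psi) + L"
proof -
  define z where "z = p2 * psi"
  define M where "M = psi / (1 - psi)"
  have z0: "0 < z" using p2 psi by (simp add: z_def)
  have x1: "x < 1" using z0 by (simp add: x_def z_def[symmetric])
  have x0: "0 < x" by (simp add: x_def)
  have zx: "z * x \<le> 1 - x"
  proof -
    have "1 + z \<le> exp z" by (rule exp_ge_add_one_self)
    hence "(1 + z) * x \<le> exp z * x" using x0 by (intro mult_right_mono) auto
    also have "exp z * x = 1" by (simp add: x_def z_def exp_minus)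
    finally show ?thesis by (simp add: algebra_simps)
  qed
  have zx': "z * x / (1 - x) \<le> 1" using zx x1 by simp
  have pM: "p2 * psi + p2 * (psi^2 / (1 - psi)) = p2 * M"
    using psi by (simp add: M_def field_simps power2_eq_square)
  have m: "M * (1 - psi) = psi" using psi by (simp add: M_def)
  have "p2 * M * ((1 - psi) * x / (1 - x)) = p2 * (M * (1 - psi)) * x / (1 - x)" by simp
  also have "\<dots> = z * x / (1 - x)" unfolding m z_def by simp
  finally have e1: "p2 * M * ((1 - psi) * x / (1 - x)) = z * x / (1 - x)" .
  have e2: "p2 * M * ((p2 * (1 - psi) + (1 - p2)) / p2) = p2 * psi + M * (1 - p2)"
    using psi p2 by (simp add: M_def field_simps)
  have e3: "p2 * (psi^2 / (1 - psi)) + p2 * psi = p2 * M"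
    using psi by (simp add: M_def field_simps power2_eq_square)
  have "L + p2 * (psi^2 / (1 - psi)) + (p2 * psi + p2 * (psi^2 / (1 - psi))) *
           ((1 - psi) * x / (1 - x) + (p2 * (1 - psi) + (1 - p2)) / p2)
      = L + p2 * (psi^2 / (1 - psi)) + z * x / (1 - x) + p2 * psi + M * (1 - p2)"
    unfolding pM distrib_left e1 e2 by simp
  also have "\<dots> = L + M + z * x / (1 - x)" using e3 by (simp add: algebra_simps)
  finally show ?thesis using zx' by (simp add: M_def)
qed

lemma upper_partial:
  fixes p1 p2 c psi lam :: real
  assumes p1: "0 < p1" "p1 < 1" and p2: "0 < p2" "p2 < 1" and psi: "0 < psi" "psi < 1"
    and lam: "lam = - ln (1 - p1)" and lc: "lam * c = p2 * (psi^2 / (1 - psi))" and c: "0 < c"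
    and tu_def: "tu = (\<lambda>k::nat. if k = 0 then - ln (1 - psi) / lam else p2 * psi / lam)"
  shows "semi_fractional tu"
    and "(\<Sum>k<n. (tu k + c) * still_closed (1 - p1) (1 - p2) tu k)
          \<le> (1 + psi / (1 - psi) - ln (1 - psi)) / lam"
proof -
  have l0: "0 < lam" using p1 lam by simp
  have lp: "ln (1 - psi) \<le> 0" using psi by simp
  have "ln (1 - psi) / lam \<le> 0" using lp l0 by (simp add: divide_nonpos_pos)
  hence tnn: "\<And>j. 0 \<le> tu j" using l0 p2 psi by (simp add: tu_def)
  thus "semi_fractional tu" by (simp add: semi_fractional_def)
  define A where "A = (\<lambda>k. exp (- lam * One_time tu k))"
  define S where "S = (\<lambda>k. still_closed (1 - p1) (1 - p2) tu k)"
  note F = seq_facts[of p1 p2 lam tu, OF p1 p2 lam tnn, folded A_def S_def]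
  define x where "x = exp (- (p2 * psi))"
  define tau where "tau = p2 * psi / lam"
  define G where "G = (\<lambda>a s. (tau + c) * (a * x / (1 - x) + s / p2))"
  have x0: "0 < x" by (simp add: x_def)
  have x1: "x < 1" using p2 psi by (simp add: x_def)
  have A1: "A 1 = 1 - psi" using F(4)[of 0] l0 psi
    by (simp add: A_def tu_def)
  have S1: "S 1 = p2 * (1 - psi) + (1 - p2)" using F(5)[of 0] F(2) A1 unfolding A_def by simp
  have AS: "A (Suc (Suc k)) = A (Suc k) * x" for k
    using F(4)[of "Suc k"] l0 by (simp add: A_def tu_def x_def)
  have SS: "S (Suc (Suc k)) = p2 * (A (Suc k) * x) + (1 - p2) * S (Suc k)" for k
    using F(5)[of "Suc k"] AS unfolding A_def by simp
  have stepG: "(tau + c) * S (Suc k) + G (A (Suc (Suc k))) (S (Suc (Suc k))) = G (A (Suc k)) (S (Suc k))" for k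
  proof -
    define a where "a = A (Suc k)"
    define b where "b = S (Suc k)"
    have x1': "1 - x \<noteq> 0" using x1 by simp
    have p2': "p2 \<noteq> 0" using p2 by simp
    have inner: "b + ((a * x) * x / (1 - x) + (p2 * (a * x) + (1 - p2) * b) / p2) = a * x / (1 - x) + b / p2"
      using x1' p2' by (simp add: field_simps)
    have "(tau + c) * b + (tau + c) * ((a * x) * x / (1 - x) + (p2 * (a * x) + (1 - p2) * b) / p2)
       = (tau + c) * (a * x / (1 - x) + b / p2)"
      unfolding inner[symmetric] by (simp add: distrib_left)
    thus ?thesis unfolding G_def AS SS a_def b_def .
  qed
  have Gnn: "0 \<le> G (A k) (S k)" for k
  proof -
    have "0 \<le> tau" using p2 psi l0 by (simp add: tau_def)
    moreover have "0 \<le> A k" by (simp add: A_def)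
    moreover have "0 \<le> S k" using F(6)[of k] by (simp add: A_def) (meson exp_ge_zero order_trans)
    ultimately show ?thesis unfolding G_def using x0 x1 c p2 by simp
  qed
  define f where "f = (\<lambda>k. (tu k + c) * S k)"
  have tel: "(\<Sum>k<Suc n. f k) + G (A (Suc n)) (S (Suc n)) = f 0 + G (A 1) (S 1)" for n
  proof (induction n)
    case 0 thus ?case by simp
  next
    case (Suc n)
    have "f (Suc n) = (tau + c) * S (Suc n)" by (simp add: f_def tu_def tau_def)
    thus ?case using Suc stepG[of n] by simp
  qed
  have bnd: "(\<Sum>k<n. f k) \<le> f 0 + G (A 1) (S 1)"
  proof (cases n)
    case 0
    have "0 \<le> f 0" using F(2) c tnn[of 0] by (simp add: f_def)
    thus ?thesis using 0 Gnn[of 1] by simp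
  next
    case (Suc m) thus ?thesis using tel[of m] Gnn[of "Suc m"] by simp
  qed
  have f0: "f 0 = - ln (1 - psi) / lam + c" using F(2) by (simp add: f_def tu_def)
  have "lam * (f 0 + G (A 1) (S 1)) = - ln (1 - psi) + p2 * (psi^2 / (1 - psi)) + (p2 * psi + p2 * (psi^2 / (1 - psi))) *
           ((1 - psi) * x / (1 - x) + (p2 * (1 - psi) + (1 - p2)) / p2)"
  proof -
    have lt: "lam * (tau + c) = p2 * psi + p2 * (psi^2 / (1 - psi))"
      using lc l0 by (simp add: tau_def distrib_left)
    have a: "lam * f 0 = - ln (1 - psi) + p2 * (psi^2 / (1 - psi))"
      unfolding f0 using l0 lc by (simp add: distrib_left right_diff_distrib)
    have b: "lam * G (A 1) (S 1) = (p2 * psi + p2 * (psi^2 / (1 - psi))) *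
           ((1 - psi) * x / (1 - x) + (p2 * (1 - psi) + (1 - p2)) / p2)"
      unfolding G_def A1 S1 lt[symmetric] by (simp only: mult.assoc)
    show ?thesis unfolding distrib_left a b by simp
  qed
  also have "\<dots> \<le> 1 + psi / (1 - psi) + - ln (1 - psi)"
    using upper_real[OF p2 psi, of "- ln (1 - psi)"] unfolding x_def by simp
  finally have "f 0 + G (A 1) (S 1) \<le> (1 + psi / (1 - psi) - ln (1 - psi)) / lam"
    using l0 by (simp add: field_simps)
  with bnd show "(\<Sum>k<n. (tu k + c) * still_closed (1 - p1) (1 - p2) tu k)
          \<le> (1 + psi / (1 - psi) - ln (1 - psi)) / lam" by (simp add: f_def S_def)
qed

lemma f_nonneg:
  fixes p1 p2 c :: real
  assumes "0 < p1" "p1 < 1" "0 < p2" "p2 < 1" "0 < c" "\<And>j. 0 \<le> t j"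
  shows "0 \<le> (t k + c) * still_closed (1 - p1) (1 - p2) t k"
    and "c * exp (- (- ln (1 - p1)) * One_time t k) \<le> (t k + c) * still_closed (1 - p1) (1 - p2) t k"
proof -
  note F = seq_facts[of p1 p2 "- ln (1 - p1)" t, OF assms(1-4) refl assms(6)]
  have a: "exp (- (- ln (1 - p1)) * One_time t k) \<le> still_closed (1 - p1) (1 - p2) t k"
    using F(6)[of k] by simp
  have "c * exp (- (- ln (1 - p1)) * One_time t k) \<le> c * still_closed (1 - p1) (1 - p2) t k"
    using a assms(5) by simp
  also have "\<dots> \<le> (t k + c) * still_closed (1 - p1) (1 - p2) t k"
    using assms(6)[of k] a by (intro mult_right_mono) (auto intro: order_trans[OF exp_ge_zero])
  finally show "c * exp (- (- ln (1 - p1)) * One_time t k) \<le> (t k + c) * still_closed (1 - p1) (1 - p2) t k" .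
  moreover have "0 \<le> c * exp (- (- ln (1 - p1)) * One_time t k)" using assms(5) by simp
  ultimately show "0 \<le> (t k + c) * still_closed (1 - p1) (1 - p2) t k" by linarith
qed

theorem mainTheorem15:
  fixes p1 p2 c :: real and t :: "nat \<Rightarrow> real"
  assumes "0 < p1" "p1 < 1" "0 < p2" "p2 < 1" "0 < c"
    and "optimal_seq p1 p2 c t"
  defines "q1 \<equiv> 1 - p1"
  defines "\<theta> \<equiv> - c * ln q1 / p2"
  defines "\<psi> \<equiv> (sqrt (\<theta>\<^sup>2 + 4 * \<theta>) - \<theta>) / 2"
  shows "\<exists>x. exp_time p1 p2 c t = ennreal x \<and>
           x \<in> {(ln (1 / (1 - \<psi>)) + \<theta> / \<psi> + 1) / ln (1 / q1) - p2 / ln (1 / q1)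
                 .. (ln (1 / (1 - \<psi>)) + \<theta> / \<psi> + 1) / ln (1 / q1)}"
proof -
  define lam where "lam = - ln (1 - p1)"
  have l0: "0 < lam" using assms(1,2) by (simp add: lam_def)
  have lq: "ln (1 / q1) = lam" using assms(1,2) by (simp add: q1_def lam_def ln_div)
  have th: "\<theta> = c * lam / p2" by (simp add: \<theta>_def lam_def q1_def)
  have th0: "0 < \<theta>" using th l0 assms by simp
  have sq: "sqrt (\<theta>\<^sup>2 + 4 * \<theta>) ^ 2 = \<theta>\<^sup>2 + 4 * \<theta>" using th0 by simp
  have s1: "\<theta> < sqrt (\<theta>\<^sup>2 + 4 * \<theta>)"
    using th0 by (intro real_less_rsqrt) (simp add: power2_eq_square)
  have s2: "sqrt (\<theta>\<^sup>2 + 4 * \<theta>) < \<theta> + 2"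
    using th0 by (intro real_less_lsqrt) (auto simp: power2_eq_square algebra_simps)
  have psi0: "0 < \<psi>" using s1 by (simp add: \<psi>_def)
  have psi1: "\<psi> < 1" using s2 by (simp add: \<psi>_def)
  have quad: "\<psi>^2 + \<theta> * \<psi> = \<theta>"
  proof -
    have "2 * \<psi> + \<theta> = sqrt (\<theta>\<^sup>2 + 4 * \<theta>)" unfolding \<psi>_def by (simp add: field_simps)
    hence "(2 * \<psi> + \<theta>)^2 = \<theta>\<^sup>2 + 4 * \<theta>" using sq by simp
    thus ?thesis by (simp add: power2_eq_square algebra_simps)
  qed
  have thpsi: "\<theta> = \<psi>^2 / (1 - \<psi>)" using quad psi1 by (simp add: field_simps algebra_simps)
  have lc: "lam * c = p2 * (\<psi>^2 / (1 - \<psi>))" using th assms(3) thpsi[symmetric] by (simp add: field_simps)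
  have tp: "\<theta> / \<psi> = \<psi> / (1 - \<psi>)" using thpsi psi0 psi1 by (simp add: field_simps power2_eq_square)
  define K0 where "K0 = 1 + \<psi> / (1 - \<psi>) - ln (1 - \<psi>)"
  have endpt: "(ln (1 / (1 - \<psi>)) + \<theta> / \<psi> + 1) / ln (1 / q1) = K0 / lam"
    unfolding lq tp K0_def using psi1 by (simp add: ln_div)
  have endpt2: "p2 / ln (1 / q1) = p2 / lam" using lq by simp
  define tu where "tu = (\<lambda>k::nat. if k = 0 then - ln (1 - \<psi>) / lam else p2 * \<psi> / lam)"
  note U = upper_partial[OF assms(1-4) psi0 psi1 lam_def lc assms(5) tu_def]
  have tu_nn: "\<And>j. 0 \<le> tu j" using U(1) by (simp add: semi_fractional_def)
  define fu where "fu = (\<lambda>k. (tu k + c) * still_closed (1 - p1) (1 - p2) tu k)"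
  have fu_nn: "\<And>k. 0 \<le> fu k" unfolding fu_def using f_nonneg(1)[OF assms(1-5) tu_nn] .
  have fu_sum: "summable fu"
    by (rule summableI_nonneg_bounded[OF fu_nn]) (use U(2) in \<open>simp add: fu_def K0_def\<close>)
  have fu_le: "suminf fu \<le> K0 / lam"
    using suminf_le_const[OF fu_sum] U(2) by (simp add: fu_def K0_def)
  have Eu: "exp_time p1 p2 c tu = ennreal (suminf fu)"
    unfolding exp_time_def using suminf_ennreal2[OF fu_nn fu_sum] by (simp add: fu_def)
  have sf: "semi_fractional t" and opt: "exp_time p1 p2 c t \<le> exp_time p1 p2 c tu"
    using assms(6) U(1) by (auto simp: optimal_seq_def)
  have t_nn: "\<And>j. 0 \<le> t j" using sf by (simp add: semi_fractional_def)
  define f where "f = (\<lambda>k. (t k + c) * still_closed (1 - p1) (1 - p2) t k)"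
  have f_nn: "\<And>k. 0 \<le> f k" unfolding f_def using f_nonneg(1)[OF assms(1-5) t_nn] .
  have Et_le: "exp_time p1 p2 c t \<le> ennreal (K0 / lam)"
    using opt Eu fu_le by (metis ennreal_leI order_trans)
  have f_sum: "summable f"
  proof (rule summable_suminf_not_top[OF f_nn])
    have "(\<Sum>i. ennreal (f i)) = exp_time p1 p2 c t" by (simp add: exp_time_def f_def)
    thus "(\<Sum>i. ennreal (f i)) \<noteq> top" using Et_le
      by (metis ennreal_neq_top neq_top_trans)
  qed
  have Et: "exp_time p1 p2 c t = ennreal (suminf f)"
    unfolding exp_time_def using suminf_ennreal2[OF f_nn f_sum] by (simp add: f_def)
  have K0l: "0 \<le> K0 / lam"
  proof -
    have "0 \<le> suminf fu" using fu_nn fu_sum by (simp add: suminf_nonneg)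
    thus ?thesis using fu_le by simp
  qed
  have up: "suminf f \<le> K0 / lam" using Et_le Et K0l by (simp add: ennreal_le_iff)
  define K where "K = K0 - p2"
  have Kdef: "K = 1 + \<psi> / (1 - \<psi>) - ln (1 - \<psi>) - p2" by (simp add: K_def K0_def)
  define An where "An = (\<lambda>n. exp (- lam * One_time t n))"
  have LP: "K - An n * exp (K - 1) \<le> lam * (\<Sum>k<n. f k)" for n
    using lower_partial[where n=n, OF assms(1-4) psi0 psi1 lam_def lc t_nn Kdef] by (simp add: An_def f_def)
  have f0: "f \<longlonglongrightarrow> 0" using f_sum by (rule summable_LIMSEQ_zero)
  have An0: "An \<longlonglongrightarrow> 0"
  proof -
    have "(\<lambda>n. f n / c) \<longlonglongrightarrow> 0 / c" by (intro tendsto_divide f0 tendsto_const) (use assms(5) in simp)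
    hence g: "(\<lambda>n. f n / c) \<longlonglongrightarrow> 0" by simp
    show ?thesis
    proof (rule tendsto_sandwich[OF _ _ tendsto_const g])
      show "\<forall>\<^sub>F n in sequentially. 0 \<le> An n" by (simp add: An_def)
      have "An n \<le> f n / c" for n
        using f_nonneg(2)[of p1 p2 c t n, OF assms(1-5) t_nn] assms(5) by (simp add: An_def f_def lam_def field_simps)
      thus "\<forall>\<^sub>F n in sequentially. An n \<le> f n / c" by simp
    qed
  qed
  have lim: "(\<lambda>n. lam * (\<Sum>k<n. f k) + An n * exp (K - 1)) \<longlonglongrightarrow> lam * suminf f + 0 * exp (K - 1)"
    by (intro tendsto_add tendsto_mult tendsto_const An0 summable_LIMSEQ f_sum)
  have "K \<le> lam * suminf f"
    using LIMSEQ_le_const[OF lim] LP by (simp add: algebra_simps)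
  hence lo: "(K0 - p2) / lam \<le> suminf f" using l0 by (simp add: K_def field_simps)
  show ?thesis
  proof (intro exI conjI)
    show "exp_time p1 p2 c t = ennreal (suminf f)" by (rule Et)
    show "suminf f \<in> {(ln (1 / (1 - \<psi>)) + \<theta> / \<psi> + 1) / ln (1 / q1) - p2 / ln (1 / q1)
                 .. (ln (1 / (1 - \<psi>)) + \<theta> / \<psi> + 1) / ln (1 / q1)}"
      unfolding endpt endpt2 using up lo by (simp add: diff_divide_distrib)
  qed
qed

end
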